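(* Let $\bar U_K^*:=\{x\in\mathcal E^K:\ x\cdot v\ge0\ \text{for all } v\in\bar U_K\}$. Then \[ \bar U_K^*=\Big\{x\in\mathcal E^K:\ \sum_{\ell=k}^K x_\ell\ge0\ \text{for all } k\in\{1,\dots,K\}\Big\}, \] and \[ \bar U_K=\{v\in\mathcal E^K:\ x\cdot v\ge0\ \text{for all } x\in\bar U_K^*\}. \]
   Context: Fix integers $D,K\ge1$. Either $\mathcal C=(0,\infty)^D$, $\bar{\mathcal C}=\mathbb{R}_+^D$, $\mathcal E=\mathbb{R}^D$ with the Euclidean inner product, or $\bar{\mathcal C}=S^D_+$ (positive semidefinite symmetric $D\times D$ matrices), $\mathcal E=S^D$ (symmetric matrices) with $a\cdot b=\mathrm{tr}(a^*b)$. For $x,y\in\mathcal E$, $x\le y$ means $y-x\in\bar{\mathcal C}$ (so "$\ge0$" means membership in $\bar{\mathcal C}$). $\bar U_K=\{x=(x_1,\dots,x_K)\in\bar{\mathcal C}^K: x_1\le\dots\le x_K\}$, and on $\mathcal E^K$, $x\cdot y=\sum_{k=1}^K x_k\cdot y_k$. *)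

theory Defs
  imports "HOL-Analysis.Analysis"
begin

text \<open>K-tuples (x_1,...,x_K) in E^K are represented as functions nat => 'a,
  only the indices 1..K being relevant. The ambient space E is a set E (a subspace of
  the HOL type), the closed cone Cbar is a set C, and x <= y means y - x in C.\<close>

definition tuple_inner :: "nat \<Rightarrow> (nat \<Rightarrow> 'a::real_inner) \<Rightarrow> (nat \<Rightarrow> 'a) \<Rightarrow> real" where
  "tuple_inner K x y = (\<Sum>k=1..K. inner (x k) (y k))"

definition Ubar :: "'a::real_vector set \<Rightarrow> nat \<Rightarrow> (nat \<Rightarrow> 'a) set" where
  "Ubar C K = {x. (\<forall>k\<in>{1..K}. x k \<in> C) \<and> (\<forall>k\<in>{1..<K}. x (Suc k) - x k \<in> C)}"

definition Ustar :: "'a::real_inner set \<Rightarrow> 'a set \<Rightarrow> nat \<Rightarrow> (nat \<Rightarrow> 'a) set" where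
  "Ustar E C K = {x. (\<forall>k\<in>{1..K}. x k \<in> E) \<and> (\<forall>v\<in>Ubar C K. 0 \<le> tuple_inner K x v)}"

definition orthant :: "(real^'d) set" where
  "orthant = {x. \<forall>i. 0 \<le> x $ i}"

text \<open>Case 2: E = S^D (symmetric matrices), Cbar = S^D_+; the inner product on
  real^'d^'d is sum_{i,j} a_ij b_ij = tr(a^* b).\<close>
definition symmat :: "(real^'d^'d) set" where
  "symmat = {A. transpose A = A}"

definition psdmat :: "(real^'d^'d) set" where
  "psdmat = {A. transpose A = A \<and> (\<forall>v. 0 \<le> v \<bullet> (A *v v))}"

end

theory Submission
  imports Defs
begin

lemma abel_sum:
  fixes x v :: "nat \<Rightarrow> 'a::real_inner"
  shows "(\<Sum>l=1..n. inner (x l) (v l)) =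
         (\<Sum>k=1..n. inner (\<Sum>l=k..n. x l) (v k - (if k = 1 then 0 else v (k-1))))"
proof (induction n)
  case 0 then show ?case by simp
next
  case (Suc n)
  define d where "d k = v k - (if k = 1 then 0 else v (k-1))" for k
  have tele: "(\<Sum>k=1..m. d k) = (if m = 0 then 0 else v m)" for m
    by (induction m) (auto simp: d_def sum.nat_ivl_Suc')
  have split: "(\<Sum>l=k..Suc n. x l) = (\<Sum>l=k..n. x l) + x (Suc n)" if "k \<le> Suc n" for k
    using that by (simp add: sum.nat_ivl_Suc' add.commute)
  have "(\<Sum>k=1..Suc n. inner (\<Sum>l=k..Suc n. x l) (d k))
      = (\<Sum>k=1..Suc n. inner (\<Sum>l=k..n. x l) (d k) + inner (x (Suc n)) (d k))"
    by (rule sum.cong) (auto simp: split inner_add_left)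
  also have "\<dots> = (\<Sum>k=1..Suc n. inner (\<Sum>l=k..n. x l) (d k)) + inner (x (Suc n)) (\<Sum>k=1..Suc n. d k)"
    by (simp only: sum.distrib inner_sum_right)
  also have "(\<Sum>k=1..Suc n. inner (\<Sum>l=k..n. x l) (d k)) = (\<Sum>k=1..n. inner (\<Sum>l=k..n. x l) (d k))"
    by (simp add: sum.nat_ivl_Suc')
  also have "(\<Sum>k=1..Suc n. d k) = v (Suc n)" using tele[of "Suc n"] by simp
  finally show ?case using Suc by (simp add: d_def sum.nat_ivl_Suc' add.commute)
qed


lemma abstract_dual:
  fixes E C :: "'a::real_inner set"
  assumes sub: "subspace E" and CE: "C \<subseteq> E" and C0: "0 \<in> C"
    and H2: "\<And>a b. a \<in> C \<Longrightarrow> b \<in> C \<Longrightarrow> 0 \<le> inner a b"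
    and H3: "\<And>a. a \<in> E \<Longrightarrow> (\<And>c. c \<in> C \<Longrightarrow> 0 \<le> inner a c) \<Longrightarrow> a \<in> C"
  shows "Ustar E C K = {x. (\<forall>k\<in>{1..K}. x k \<in> E) \<and> (\<forall>k\<in>{1..K}. (\<Sum>l=k..K. x l) \<in> C)}
    \<and> Ubar C K = {v. (\<forall>k\<in>{1..K}. v k \<in> E) \<and> (\<forall>x\<in>Ustar E C K. 0 \<le> tuple_inner K x v)}"
proof
  show "Ustar E C K = {x. (\<forall>k\<in>{1..K}. x k \<in> E) \<and> (\<forall>k\<in>{1..K}. (\<Sum>l=k..K. x l) \<in> C)}"
  proof (intro set_eqI iffI)
    fix x assume x: "x \<in> Ustar E C K"
    then have xE: "\<forall>k\<in>{1..K}. x k \<in> E" and xv: "\<And>v. v \<in> Ubar C K \<Longrightarrow> 0 \<le> tuple_inner K x v"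
      by (auto simp: Ustar_def)
    have "(\<Sum>l=k..K. x l) \<in> C" if k: "k \<in> {1..K}" for k
    proof (rule H3)
      show "(\<Sum>l=k..K. x l) \<in> E" using xE k by (intro subspace_sum[OF sub]) auto
    next
      fix c assume c: "c \<in> C"
      define v where "v l = (if k \<le> l then c else 0)" for l
      have "v \<in> Ubar C K"
        unfolding Ubar_def v_def using c C0 subspace_0[OF sub]
        by auto
      then have "0 \<le> tuple_inner K x v" by (rule xv)
      also have "tuple_inner K x v = (\<Sum>l\<in>{1..K}. if k \<le> l then inner (x l) c else 0)"
        unfolding tuple_inner_def v_def by (intro sum.cong) auto
      also have "\<dots> = (\<Sum>l\<in>{k..K}. inner (x l) c)"
        using k by (subst sum.If_cases) (auto intro!: sum.cong)
      also have "\<dots> = inner (\<Sum>l=k..K. x l) c" by (simp add: inner_sum_left)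
      finally show "0 \<le> inner (\<Sum>l=k..K. x l) c" .
    qed
    then show "x \<in> {x. (\<forall>k\<in>{1..K}. x k \<in> E) \<and> (\<forall>k\<in>{1..K}. (\<Sum>l=k..K. x l) \<in> C)}"
      using xE by auto
  next
    fix x assume "x \<in> {x. (\<forall>k\<in>{1..K}. x k \<in> E) \<and> (\<forall>k\<in>{1..K}. (\<Sum>l=k..K. x l) \<in> C)}"
    then have xE: "\<forall>k\<in>{1..K}. x k \<in> E" and S: "\<And>k. k \<in> {1..K} \<Longrightarrow> (\<Sum>l=k..K. x l) \<in> C" by auto
    have "0 \<le> tuple_inner K x v" if v: "v \<in> Ubar C K" for v
    proof -
      have "tuple_inner K x v = (\<Sum>k=1..K. inner (\<Sum>l=k..K. x l) (v k - (if k = 1 then 0 else v (k-1))))"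
        unfolding tuple_inner_def by (rule abel_sum)
      also have "\<dots> \<ge> 0"
      proof (intro sum_nonneg H2 S)
        fix k assume k: "k \<in> {1..K}"
        show "v k - (if k = 1 then 0 else v (k - 1)) \<in> C"
        proof (cases "k = 1")
          case True then show ?thesis using v k by (auto simp: Ubar_def)
        next
          case False
          then have "k - 1 \<in> {1..<K}" "Suc (k-1) = k" using k by auto
          then have "v (Suc (k-1)) - v (k-1) \<in> C" using v unfolding Ubar_def by blast
          then show ?thesis using False \<open>Suc (k-1) = k\<close> by simp
        qed
      qed
      finally show ?thesis .
    qed
    then show "x \<in> Ustar E C K" using xE by (auto simp: Ustar_def)
  qed
next
  show "Ubar C K = {v. (\<forall>k\<in>{1..K}. v k \<in> E) \<and> (\<forall>x\<in>Ustar E C K. 0 \<le> tuple_inner K x v)}"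
  proof (intro set_eqI iffI)
    fix v assume v: "v \<in> Ubar C K"
    then show "v \<in> {v. (\<forall>k\<in>{1..K}. v k \<in> E) \<and> (\<forall>x\<in>Ustar E C K. 0 \<le> tuple_inner K x v)}"
      using CE by (auto simp: Ubar_def Ustar_def)
  next
    fix v assume "v \<in> {v. (\<forall>k\<in>{1..K}. v k \<in> E) \<and> (\<forall>x\<in>Ustar E C K. 0 \<le> tuple_inner K x v)}"
    then have vE: "\<And>k. k \<in> {1..K} \<Longrightarrow> v k \<in> E" and vx: "\<And>x. x \<in> Ustar E C K \<Longrightarrow> 0 \<le> tuple_inner K x v"
      by auto
    have single: "tuple_inner K (\<lambda>l. if l = k then c else 0) w = inner c (w k)" if "k \<in> {1..K}" for k c w
    proof -
      have "tuple_inner K (\<lambda>l. if l = k then c else 0) w = (\<Sum>l\<in>{1..K}. if l = k then inner c (w l) else 0)"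
        unfolding tuple_inner_def by (intro sum.cong) auto
      also have "\<dots> = inner c (w k)" using that by (simp add: sum.delta)
      finally show ?thesis .
    qed
    have vC: "v k \<in> C" if k: "k \<in> {1..K}" for k
    proof (rule H3[OF vE[OF k]])
      fix c assume c: "c \<in> C"
      have "(\<lambda>l. if l = k then c else 0) \<in> Ustar E C K"
        unfolding Ustar_def
      proof (intro CollectI conjI ballI)
        fix l show "(if l = k then c else 0) \<in> E" using c CE subspace_0[OF sub] by auto
      next
        fix w assume "w \<in> Ubar C K"
        then have "w k \<in> C" using k by (auto simp: Ubar_def)
        then show "0 \<le> tuple_inner K (\<lambda>l. if l = k then c else 0) w"
          unfolding single[OF k] by (rule H2[OF c])
      qed
      then have "0 \<le> tuple_inner K (\<lambda>l. if l = k then c else 0) v" by (rule vx)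
      then show "0 \<le> inner (v k) c" unfolding single[OF k] by (simp add: inner_commute)
    qed
    have vD: "v (Suc k) - v k \<in> C" if k: "k \<in> {1..<K}" for k
    proof (rule H3)
      show "v (Suc k) - v k \<in> E" using k vE by (intro subspace_diff[OF sub]) auto
    next
      fix c assume c: "c \<in> C"
      define x where "x = (\<lambda>l. if l = Suc k then c else if l = k then - c else 0)"
      have xs: "x = (\<lambda>l. (if l = Suc k then c else 0) + (if l = k then - c else 0))"
        unfolding x_def using k by auto
      have ti: "tuple_inner K x w = inner c (w (Suc k) - w k)" for w
      proof -
        have "tuple_inner K x w = tuple_inner K (\<lambda>l. if l = Suc k then c else 0) w
            + tuple_inner K (\<lambda>l. if l = k then - c else 0) w"
          unfolding xs tuple_inner_def by (simp add: inner_add_left sum.distrib)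
        also have "\<dots> = inner c (w (Suc k)) + inner (-c) (w k)"
          using k by (simp add: single)
        finally show ?thesis by (simp add: inner_diff_right)
      qed
      have "x \<in> Ustar E C K"
        unfolding Ustar_def
      proof (intro CollectI conjI ballI)
        fix l show "x l \<in> E" using c CE subspace_0[OF sub] subspace_neg[OF sub] unfolding x_def by auto
      next
        fix w assume "w \<in> Ubar C K"
        then have "w (Suc k) - w k \<in> C" using k by (auto simp: Ubar_def)
        then show "0 \<le> tuple_inner K x w" using ti H2 c by simp
      qed
      then have "0 \<le> tuple_inner K x v" by (rule vx)
      then show "0 \<le> inner (v (Suc k) - v k) c" using ti by (simp add: inner_commute)
    qed
    show "v \<in> Ubar C K" using vC vD by (auto simp: Ubar_def)
  qed
qed

definition outerp :: "real^'d \<Rightarrow> real^'d^'d" where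
  "outerp u = (\<chi> i j. u$i * u$j)"

lemma quad_expand: "(u::real^'d) \<bullet> (B *v w) = (\<Sum>i\<in>UNIV. \<Sum>j\<in>UNIV. u$i * B$i$j * w$j)"
  by (simp add: inner_vec_def matrix_vector_mult_def sum_distrib_left mult.assoc)

lemma inner_outerp: "inner (B::real^'d^'d) (outerp u) = u \<bullet> (B *v u)"
  unfolding quad_expand by (simp add: inner_vec_def outerp_def mult_ac sum_distrib_left)

lemma outerp_mult: "outerp w *v v = (w \<bullet> v) *\<^sub>R w"
  by (simp add: vec_eq_iff outerp_def matrix_vector_mult_def inner_vec_def sum_distrib_left mult_ac)

lemma outerp_psd: "outerp u \<in> psdmat"
  unfolding psdmat_def
proof (intro CollectI conjI allI)
  show "transpose (outerp u) = outerp u" by (simp add: vec_eq_iff transpose_def outerp_def mult.commute)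
  fix v have "v \<bullet> (outerp u *v v) = (u \<bullet> v)^2"
    by (simp add: outerp_mult power2_eq_square inner_commute)
  then show "0 \<le> v \<bullet> (outerp u *v v)" by simp
qed

lemma sym_entry: "transpose A = A \<Longrightarrow> A$i$j = A$j$i"
  by (metis transpose_def vec_lambda_beta)

lemma bl_sym:
  assumes "transpose A = A"
  shows "(x::real^'d) \<bullet> (A *v y) = y \<bullet> (A *v x)"
proof -
  have "x \<bullet> (A *v y) = (\<Sum>i\<in>UNIV. \<Sum>j\<in>UNIV. x$i * A$i$j * y$j)" by (rule quad_expand)
  also have "\<dots> = (\<Sum>j\<in>UNIV. \<Sum>i\<in>UNIV. x$i * A$i$j * y$j)" by (rule sum.swap)
  also have "\<dots> = (\<Sum>j\<in>UNIV. \<Sum>i\<in>UNIV. y$j * A$j$i * x$i)"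
    using sym_entry[OF assms] by (simp add: mult_ac)
  also have "\<dots> = y \<bullet> (A *v x)" by (rule quad_expand[symmetric])
  finally show ?thesis .
qed

lemma quad_real:
  fixes a b c :: real
  assumes "\<And>t. 0 \<le> c + 2*t*b + t^2*a" "0 \<le> a"
  shows "b^2 \<le> a*c"
proof (cases "a = 0")
  case True
  show ?thesis
  proof (cases "b = 0")
    case False
    have "0 \<le> c + 2*(-(c+1)/(2*b))*b + (-(c+1)/(2*b))^2*a" by (rule assms(1))
    moreover have "2*(-(c+1)/(2*b))*b = -(c+1)" using False by simp
    moreover have "(-(c+1)/(2*b))^2*a = 0" using True by simp
    ultimately have False by linarith
    then show ?thesis ..
  qed (use True assms in simp)
next
  case False
  then have a: "a > 0" using assms(2) by simp
  have "0 \<le> c + 2*(-b/a)*b + (-b/a)^2*a" by (rule assms(1))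
  also have "2*(-b/a)*b = -2*(b^2/a)" by (simp add: power2_eq_square)
  also have "(-b/a)^2*a = b^2/a" using a by (simp add: power_divide power2_eq_square)
  finally have "0 \<le> c - b^2/a" by simp
  then have "b^2/a \<le> c" by simp
  then show ?thesis using a by (simp add: divide_le_eq mult.commute)
qed

lemma psd_cs:
  assumes "A \<in> psdmat"
  shows "((x::real^'d) \<bullet> (A *v y))^2 \<le> (x \<bullet> (A *v x)) * (y \<bullet> (A *v y))"
proof -
  have sym: "transpose A = A" and pos: "\<And>v. 0 \<le> v \<bullet> (A *v v)" using assms by (auto simp: psdmat_def)
  have "(x \<bullet> (A *v y))^2 \<le> (y \<bullet> (A *v y)) * (x \<bullet> (A *v x))"
  proof (rule quad_real)
    fix t :: real
    have "(x + t *\<^sub>R y) \<bullet> (A *v (x + t *\<^sub>R y))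
       = x \<bullet> (A *v x) + 2*t*(x \<bullet> (A *v y)) + t^2 * (y \<bullet> (A *v y))"
    proof -
      have "A *v (x + t *\<^sub>R y) = A *v x + t *\<^sub>R (A *v y)"
        by (simp only: matrix_vector_right_distrib matrix_vector_mult_scaleR)
      then have "(x + t *\<^sub>R y) \<bullet> (A *v (x + t *\<^sub>R y))
          = x \<bullet> (A *v x) + t * (x \<bullet> (A *v y)) + t * (y \<bullet> (A *v x)) + t * (t * (y \<bullet> (A *v y)))"
        by (simp only: inner_add_left inner_add_right inner_scaleR_left inner_scaleR_right distrib_left add.assoc)
      also have "y \<bullet> (A *v x) = x \<bullet> (A *v y)" by (rule bl_sym[OF sym])
      finally show ?thesis by (simp add: power2_eq_square)
    qed
    then show "0 \<le> x \<bullet> (A *v x) + 2*t*(x \<bullet> (A *v y)) + t^2 * (y \<bullet> (A *v y))"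
      using pos by metis
  qed (rule pos)
  then show ?thesis by (simp add: mult.commute)
qed

lemma axis_quad: "axis i 1 \<bullet> (A *v axis j 1) = (A::real^'d^'d)$i$j"
  by (simp only: inner_axis' matrix_vector_mult_basis inner_real_def mult_1) (simp add: column_def)

lemma psd_diag: "A \<in> psdmat \<Longrightarrow> 0 \<le> (A::real^'d^'d)$i$i"
proof -
  assume "A \<in> psdmat"
  then have "\<forall>v. 0 \<le> v \<bullet> (A *v v)" unfolding psdmat_def by blast
  then have "0 \<le> axis i 1 \<bullet> (A *v axis i 1)" by blast
  then show ?thesis by (simp only: axis_quad)
qed

lemma fejer_aux:
  assumes B: "(B::real^'d^'d) \<in> psdmat"
  shows "\<forall>A. A \<in> psdmat \<longrightarrow> card {i. A$i$i \<noteq> 0} = n \<longrightarrow> 0 \<le> inner A B"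
proof (induction n rule: less_induct)
  case (less n)
  show ?case
  proof (intro allI impI)
    fix A :: "real^'d^'d" assume A: "A \<in> psdmat" and cn: "card {i. A$i$i \<noteq> 0} = n"
    have sym: "transpose A = A" using A by (auto simp: psdmat_def)
    show "0 \<le> inner A B"
    proof (cases "\<forall>i. A$i$i = 0")
      case True
      have "A$i$j = 0" for i j
      proof -
        have "(A$i$j)^2 \<le> A$i$i * A$j$j" using psd_cs[OF A, of "axis i 1" "axis j 1"] by (simp add: axis_quad)
        then show ?thesis using True by simp
      qed
      then have "A = 0" by (simp add: vec_eq_iff)
      then show ?thesis by simp
    next
      case False
      then obtain i where i: "A$i$i \<noteq> 0" by auto
      define a where "a = A$i$i"
      have a: "a > 0" using psd_diag[OF A, of i] i a_def by simp
      define w where "w = A *v axis i 1"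
      have wj: "w$j = A$j$i" for j by (simp add: w_def matrix_vector_mult_basis column_def)
      define A' where "A' = A - (1/a) *\<^sub>R outerp w"
      have A'e: "A'$j$k = A$j$k - (1/a) * (A$j$i * A$k$i)" for j k
        by (simp add: A'_def outerp_def wj)
      have A'psd: "A' \<in> psdmat"
        unfolding psdmat_def
      proof (intro CollectI conjI allI)
        show "transpose A' = A'"
          using sym_entry[OF sym] by (simp add: vec_eq_iff transpose_def A'e mult.commute)
        fix v
        have "v \<bullet> (A' *v v) = v \<bullet> (A *v v) - (1/a) * (w \<bullet> v)^2"
          by (simp add: A'_def matrix_vector_mult_diff_rdistrib outerp_mult inner_diff_right power2_eq_square scaleR_matrix_vector_assoc[symmetric] inner_commute[of v w])
        moreover have "w \<bullet> v = v \<bullet> (A *v axis i 1)" by (simp add: w_def inner_commute)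
        moreover have "(v \<bullet> (A *v axis i 1))^2 \<le> (v \<bullet> (A *v v)) * a"
          using psd_cs[OF A, of v "axis i 1"] by (simp add: axis_quad a_def)
        ultimately have "v \<bullet> (A' *v v) = (v \<bullet> (A *v v) * a - (v \<bullet> (A *v axis i 1))^2) / a"
          and "0 \<le> v \<bullet> (A *v v) * a - (v \<bullet> (A *v axis i 1))^2" using a by (auto simp: field_simps)
        then show "0 \<le> v \<bullet> (A' *v v)" using a by simp
      qed
      have sub: "{j. A'$j$j \<noteq> 0} \<subset> {j. A$j$j \<noteq> 0}"
      proof
        show "{j. A'$j$j \<noteq> 0} \<subseteq> {j. A$j$j \<noteq> 0}"
        proof
          fix j assume "j \<in> {j. A'$j$j \<noteq> 0}"
          moreover have "A'$j$j \<le> A$j$j" using a by (simp add: A'e)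
          moreover have "0 \<le> A'$j$j" by (rule psd_diag[OF A'psd])
          ultimately show "j \<in> {j. A$j$j \<noteq> 0}" by auto
        qed
        have "A'$i$i = 0" using a by (simp add: A'e a_def[symmetric] power2_eq_square)
        then show "{j. A'$j$j \<noteq> 0} \<noteq> {j. A$j$j \<noteq> 0}" using i by blast
      qed
      have "card {j. A'$j$j \<noteq> 0} < n" using psubset_card_mono[OF _ sub] cn by simp
      then have IH: "0 \<le> inner A' B" using less A'psd by blast
      have "A = A' + (1/a) *\<^sub>R outerp w" by (simp add: A'_def)
      then have "inner A B = inner A' B + (1/a) * inner (outerp w) B"
        by (simp add: inner_add_left)
      also have "inner (outerp w) B = w \<bullet> (B *v w)"
        by (subst inner_commute) (rule inner_outerp)
      finally have "inner A B = inner A' B + (1/a) * (w \<bullet> (B *v w))" .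
      moreover have "0 \<le> w \<bullet> (B *v w)" using B by (auto simp: psdmat_def)
      ultimately show ?thesis using IH a by simp
    qed
  qed
qed

lemma fejer: "A \<in> psdmat \<Longrightarrow> B \<in> psdmat \<Longrightarrow> 0 \<le> inner (A::real^'d^'d) B"
  using fejer_aux by blast


lemma orthant_facts:
  shows "subspace (UNIV :: (real^'d) set)" "orthant \<subseteq> (UNIV :: (real^'d) set)" "(0::real^'d) \<in> orthant"
    "\<And>a b. a \<in> orthant \<Longrightarrow> b \<in> orthant \<Longrightarrow> 0 \<le> inner a (b::real^'d)"
    "\<And>a. a \<in> (UNIV :: (real^'d) set) \<Longrightarrow> (\<And>c. c \<in> orthant \<Longrightarrow> 0 \<le> inner a c) \<Longrightarrow> a \<in> orthant"
proof -
  show "subspace (UNIV :: (real^'d) set)" by (rule subspace_UNIV)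
  show "orthant \<subseteq> (UNIV :: (real^'d) set)" by simp
  show "(0::real^'d) \<in> orthant" by (simp add: orthant_def)
  show "0 \<le> inner a (b::real^'d)" if "a \<in> orthant" "b \<in> orthant" for a b
    using that unfolding orthant_def inner_vec_def inner_real_def by (auto intro!: sum_nonneg)
  show "a \<in> orthant" if "\<And>c. c \<in> orthant \<Longrightarrow> 0 \<le> inner a c" for a :: "real^'d"
  proof -
    have "0 \<le> a$i" for i
    proof -
      have "axis i (1::real) \<in> orthant" by (simp add: orthant_def axis_def)
      then have "0 \<le> inner a (axis i 1)" by (rule that)
      then show ?thesis by (simp only: inner_axis inner_real_def mult_1_right)
    qed
    then show ?thesis by (simp add: orthant_def)
  qed
qed

lemma psd_facts:
  shows "subspace (symmat :: (real^'d^'d) set)" "psdmat \<subseteq> (symmat :: (real^'d^'d) set)" "(0::real^'d^'d) \<in> psdmat"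
    "\<And>a b. a \<in> psdmat \<Longrightarrow> b \<in> psdmat \<Longrightarrow> 0 \<le> inner a (b::real^'d^'d)"
    "\<And>a. a \<in> (symmat :: (real^'d^'d) set) \<Longrightarrow> (\<And>c. c \<in> psdmat \<Longrightarrow> 0 \<le> inner a c) \<Longrightarrow> a \<in> psdmat"
proof -
  show "subspace (symmat :: (real^'d^'d) set)"
    unfolding subspace_def symmat_def by (auto simp: vec_eq_iff transpose_def)
  show "psdmat \<subseteq> (symmat :: (real^'d^'d) set)" by (auto simp: psdmat_def symmat_def)
  show "(0::real^'d^'d) \<in> psdmat" by (simp add: psdmat_def vec_eq_iff transpose_def)
  show "0 \<le> inner a (b::real^'d^'d)" if "a \<in> psdmat" "b \<in> psdmat" for a b
    using fejer that by blast
  show "a \<in> psdmat" if as: "a \<in> (symmat :: (real^'d^'d) set)" "\<And>c. c \<in> psdmat \<Longrightarrow> 0 \<le> inner a c" for a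
  proof -
    have "0 \<le> v \<bullet> (a *v v)" for v
      using as(2)[OF outerp_psd[of v]] by (simp only: inner_outerp)
    then show ?thesis using as(1) by (simp add: psdmat_def symmat_def)
  qed
qed

theorem lemma3p3:
  fixes K :: nat
  assumes "K \<ge> 1"
  shows "(Ustar (UNIV :: (real^'d) set) orthant K
            = {x. (\<forall>k\<in>{1..K}. x k \<in> UNIV) \<and> (\<forall>k\<in>{1..K}. (\<Sum>l=k..K. x l) \<in> orthant)}
          \<and> Ubar (orthant :: (real^'d) set) K
            = {v. (\<forall>k\<in>{1..K}. v k \<in> UNIV) \<and> (\<forall>x\<in>Ustar UNIV orthant K. 0 \<le> tuple_inner K x v)})
       \<and> (Ustar (symmat :: (real^'d^'d) set) psdmat K
            = {x. (\<forall>k\<in>{1..K}. x k \<in> symmat) \<and> (\<forall>k\<in>{1..K}. (\<Sum>l=k..K. x l) \<in> psdmat)}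
          \<and> Ubar (psdmat :: (real^'d^'d) set) K
            = {v. (\<forall>k\<in>{1..K}. v k \<in> symmat) \<and> (\<forall>x\<in>Ustar symmat psdmat K. 0 \<le> tuple_inner K x v)})"
  proof
  show "Ustar (UNIV :: (real^'d) set) orthant K
            = {x. (\<forall>k\<in>{1..K}. x k \<in> UNIV) \<and> (\<forall>k\<in>{1..K}. (\<Sum>l=k..K. x l) \<in> orthant)}
          \<and> Ubar (orthant :: (real^'d) set) K
            = {v. (\<forall>k\<in>{1..K}. v k \<in> UNIV) \<and> (\<forall>x\<in>Ustar UNIV orthant K. 0 \<le> tuple_inner K x v)}"
    by (rule abstract_dual[OF orthant_facts])
  show "Ustar (symmat :: (real^'d^'d) set) psdmat K
            = {x. (\<forall>k\<in>{1..K}. x k \<in> symmat) \<and> (\<forall>k\<in>{1..K}. (\<Sum>l=k..K. x l) \<in> psdmat)}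
          \<and> Ubar (psdmat :: (real^'d^'d) set) K
            = {v. (\<forall>k\<in>{1..K}. v k \<in> symmat) \<and> (\<forall>x\<in>Ustar symmat psdmat K. 0 \<le> tuple_inner K x v)}"
    by (rule abstract_dual[OF psd_facts])
qed

end
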